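(* Let $f(x,y)=\frac12x^\top Px-b^\top x+x^\top Ay-\frac12y^\top Qy+c^\top y$ on $\mathbb{R}^n\times\mathbb{R}^m$ with $P\succeq0$, $Q\succeq0$, and suppose a stationary point of $f$ exists. For $\nu>0$ let $z^*(\nu)$ be the saddle point of $\min_x\max_y f_\nu(x,y)$, where $f_\nu(x,y)=f(x,y)+\frac{\nu}{2}\|x\|^2-\frac{\nu}{2}\|y\|^2$. Then there exist constants $C,\delta_0>0$ such that $\|z^*(\nu_1)-z^*(\nu_2)\|\le C|\nu_1-\nu_2|$ for all $0<\nu_1,\nu_2<\delta_0$ (i.e., the error bound condition holds with exponent $\theta=1$).
   Context: The error bound condition with exponent $\theta\in(0,1]$ means: there exist $C,\delta_0>0$ such that $\|z^*(\nu_1)-z^*(\nu_2)\|\le C|\nu_1-\nu_2|^\theta$ for all $0<\nu_1,\nu_2<\delta_0$. *)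

theory Defs
  imports "HOL-Analysis.Analysis"
begin

definition psd :: "real^'k^'k \<Rightarrow> bool" where
  "psd M \<longleftrightarrow> transpose M = M \<and> (\<forall>x. 0 \<le> x \<bullet> (M *v x))"

definition qsaddle ::
  "real^'n^'n \<Rightarrow> real^'n \<Rightarrow> real^'m^'n \<Rightarrow> real^'m^'m \<Rightarrow> real^'m
   \<Rightarrow> ((real^'n) \<times> (real^'m)) \<Rightarrow> real" where
  "qsaddle P b A Q c z =
     (let x = fst z; y = snd z in
      (1/2) * (x \<bullet> (P *v x)) - b \<bullet> x + x \<bullet> (A *v y)
      - (1/2) * (y \<bullet> (Q *v y)) + c \<bullet> y)"

definition regf ::
  "(((real^'n) \<times> (real^'m)) \<Rightarrow> real) \<Rightarrow> real \<Rightarrow> ((real^'n) \<times> (real^'m)) \<Rightarrow> real" where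
  "regf f \<nu> z = f z + (\<nu>/2) * (norm (fst z))\<^sup>2 - (\<nu>/2) * (norm (snd z))\<^sup>2"

definition stationary_point :: "('a::real_normed_vector \<Rightarrow> real) \<Rightarrow> 'a \<Rightarrow> bool" where
  "stationary_point g z \<longleftrightarrow> (g has_derivative (\<lambda>h. 0)) (at z)"

definition saddle_point :: "(('a \<times> 'b) \<Rightarrow> real) \<Rightarrow> ('a \<times> 'b) \<Rightarrow> bool" where
  "saddle_point g z \<longleftrightarrow>
     (\<forall>x y. g (fst z, y) \<le> g z \<and> g z \<le> g (x, snd z))"

end

theory Submission
  imports Defs
begin

lemma tr_dot: fixes A :: "real^'m^'n" shows "x \<bullet> (A *v y) = y \<bullet> (transpose A *v x)"
proof -
  have "x \<bullet> (A *v y) = (x v* A) \<bullet> y" by (rule dot_lmul_matrix[symmetric])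
  also have "x v* A = transpose A *v x" by (simp add: transpose_matrix_vector)
  finally show ?thesis by (simp add: inner_commute)
qed

lemma psd_sym: "psd P \<Longrightarrow> x \<bullet> (P *v y) = y \<bullet> (P *v x)"
  using tr_dot[of x P y] unfolding psd_def by simp

lemma poly_min:
  fixes \<phi> :: "real \<Rightarrow> real"
  assumes "\<And>t. \<phi> t = a + t*L + t^2*K" and "\<And>t. \<phi> 0 \<le> \<phi> t"
  shows "L = 0"
proof -
  have "((\<lambda>t. a + t*L + t^2*K) has_real_derivative (0*L + L + 2*0*K)) (at 0)"
    by (auto intro!: derivative_eq_intros)
  moreover have e: "\<phi> = (\<lambda>t. a + t*L + t^2*K)" using assms(1) by auto
  ultimately have d: "(\<phi> has_real_derivative L) (at 0)" by simp
  have "\<forall>y. \<bar>0 - y\<bar> < 1 \<longrightarrow> \<phi> 0 \<le> \<phi> y" using assms(2) by simp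
  then show ?thesis using DERIV_local_min[OF d zero_less_one] by blast
qed

lemma poly_stat:
  fixes g :: "'a::real_normed_vector \<Rightarrow> real"
  assumes "\<And>t. g (z + t *\<^sub>R h) = a + t*L + t^2*K"
    and "(g has_derivative (\<lambda>_. 0)) (at z)"
  shows "L = 0"
proof -
  have lin: "((\<lambda>t::real. z + t *\<^sub>R h) has_derivative (\<lambda>t. t *\<^sub>R h)) (at 0)"
    by (auto intro!: derivative_eq_intros)
  have g0: "(g has_derivative (\<lambda>_. 0)) (at (z + 0 *\<^sub>R h))" using assms(2) by simp
  have "((\<lambda>t. g (z + t *\<^sub>R h)) has_derivative (\<lambda>_. 0)) (at 0)"
    using has_derivative_compose[OF lin g0] by (simp add: o_def)
  then have "((\<lambda>t. a + t*L + t^2*K) has_derivative (\<lambda>_. 0)) (at 0)"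
    using assms(1) by simp
  moreover have "((\<lambda>t. a + t*L + t^2*K) has_derivative (\<lambda>t. t * L)) (at 0)"
    by (auto intro!: derivative_eq_intros)
  ultimately have "(\<lambda>_. 0) = (\<lambda>t::real. t * L)"
    by (rule has_derivative_unique)
  then show ?thesis by (metis mult_1)
qed

lemma quad_exp:
  assumes "psd P"
  shows "(x + t *\<^sub>R h) \<bullet> (P *v (x + t *\<^sub>R h)) = x \<bullet> (P *v x) + 2 * t * (h \<bullet> (P *v x)) + t^2 * (h \<bullet> (P *v h))"
proof -
  have s: "x \<bullet> (P *v h) = h \<bullet> (P *v x)" using psd_sym[OF assms] .
  have "(x + t *\<^sub>R h) \<bullet> (P *v (x + t *\<^sub>R h)) = x \<bullet> (P *v x) + t * (x \<bullet> (P *v h)) + t * (h \<bullet> (P *v x)) + t * t * (h \<bullet> (P *v h))"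
    by (simp add: matrix_vector_right_distrib matrix_vector_mult_scaleR inner_add_left inner_add_right distrib_left)
  then show ?thesis using s by (simp add: power2_eq_square)
qed

lemma norm_exp: "(norm (x + t *\<^sub>R h))^2 = (norm x)^2 + 2 * t * (h \<bullet> x) + t^2 * (h \<bullet> h)"
proof -
  have 1: "(norm (x + t *\<^sub>R h))^2 = x \<bullet> x + t * (x \<bullet> h) + t * (h \<bullet> x) + t * t * (h \<bullet> h)"
    by (simp add: power2_norm_eq_inner inner_add_left inner_add_right distrib_left)
  have 2: "(norm x)^2 = x \<bullet> x" by (rule power2_norm_eq_inner)
  show ?thesis unfolding 1 2 inner_commute[of x h] by (simp add: power2_eq_square)
qed

lemma lin_exp: "(x + t *\<^sub>R h) \<bullet> v = x \<bullet> v + t * (h \<bullet> v)"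
  by (simp add: inner_add_left)

lemma lin_exp2: "v \<bullet> (x + t *\<^sub>R h) = v \<bullet> x + t * (h \<bullet> v)"
  by (simp add: inner_add_right inner_commute)

lemma exp_x:
  assumes "psd P"
  shows "regf (qsaddle P b A Q c) \<nu> (x + t *\<^sub>R h, y) = regf (qsaddle P b A Q c) \<nu> (x, y)
     + t * (h \<bullet> (P *v x + A *v y - b + \<nu> *\<^sub>R x)) + t^2 * ((h \<bullet> (P *v h))/2 + \<nu>/2 * (h \<bullet> h))"
  unfolding regf_def qsaddle_def Let_def fst_conv snd_conv quad_exp[OF assms] norm_exp lin_exp lin_exp2
  by (simp add: inner_add_right inner_diff_right algebra_simps psd_sym[OF assms, of x h] inner_commute[of x h] power2_eq_square)

lemma exp_y:
  assumes "psd Q"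
  shows "regf (qsaddle P b A Q c) \<nu> (x, y + t *\<^sub>R h) = regf (qsaddle P b A Q c) \<nu> (x, y)
     + t * (h \<bullet> (transpose A *v x - Q *v y + c - \<nu> *\<^sub>R y)) + t^2 * (-(h \<bullet> (Q *v h))/2 - \<nu>/2 * (h \<bullet> h))"
proof -
  have s2: "x \<bullet> (A *v (y + t *\<^sub>R h)) = x \<bullet> (A *v y) + t * (h \<bullet> (transpose A *v x))"
    using tr_dot[of x A h] by (simp add: matrix_vector_right_distrib matrix_vector_mult_scaleR inner_add_right)
  show ?thesis
  unfolding regf_def qsaddle_def Let_def fst_conv snd_conv quad_exp[OF assms] norm_exp lin_exp lin_exp2 s2
  by (simp add: inner_add_right inner_diff_right algebra_simps psd_sym[OF assms, of y h] inner_commute[of y h] power2_eq_square)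
qed

lemma regf0: "regf f 0 = f"
  unfolding regf_def by auto

definition Mlin :: "real^'n^'n \<Rightarrow> real^'m^'n \<Rightarrow> real^'m^'m
   \<Rightarrow> (real^'n) \<times> (real^'m) \<Rightarrow> (real^'n) \<times> (real^'m)" where
  "Mlin P A Q w = (P *v fst w + A *v snd w, Q *v snd w - transpose A *v fst w)"

lemma Mlin_linear: "linear (Mlin P A Q)"
  by (rule linearI) (auto simp: Mlin_def matrix_vector_right_distrib matrix_vector_mult_scaleR
      algebra_simps scaleR_right_diff_distrib)

lemma Mlin_bl: "bounded_linear (Mlin P A Q)"
  using Mlin_linear linear_conv_bounded_linear by blast

lemma Mlin_inner: "inner (Mlin P A Q w) w = fst w \<bullet> (P *v fst w) + snd w \<bullet> (Q *v snd w)"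
proof -
  obtain x y where w: "w = (x, y)" by (cases w)
  have "x \<bullet> (A *v y) = y \<bullet> (transpose A *v x)" by (rule tr_dot)
  then show ?thesis
    by (simp add: w Mlin_def inner_add_left inner_diff_left inner_add_right inner_diff_right inner_commute del: transpose_matrix_vector)
qed

lemma Mlin_mono: "psd P \<Longrightarrow> psd Q \<Longrightarrow> inner (Mlin P A Q w) w \<ge> 0"
  unfolding Mlin_inner by (simp add: psd_def add_nonneg_nonneg)

lemma psd_zero:
  assumes "psd P" "x \<bullet> (P *v x) = 0"
  shows "P *v x = 0"
proof -
  have "2 * ((P *v x) \<bullet> (P *v x)) = 0"
  proof (rule poly_min)
    fix t :: real
    show "(x + t *\<^sub>R (P *v x)) \<bullet> (P *v (x + t *\<^sub>R (P *v x))) = 0 + t * (2 * ((P *v x) \<bullet> (P *v x)))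
      + t^2 * ((P *v x) \<bullet> (P *v (P *v x)))"
      unfolding quad_exp[OF assms(1)] assms(2) by simp
    show "(x + 0 *\<^sub>R (P *v x)) \<bullet> (P *v (x + 0 *\<^sub>R (P *v x))) \<le>
         (x + t *\<^sub>R (P *v x)) \<bullet> (P *v (x + t *\<^sub>R (P *v x)))"
      using assms unfolding psd_def by simp
  qed
  then show ?thesis by simp
qed

lemma Mlin_inj:
  assumes "psd P" "psd Q" "w \<in> range (Mlin P A Q)" "Mlin P A Q w = 0"
  shows "w = 0"
proof -
  obtain u where u: "w = Mlin P A Q u" using assms(3) by blast
  obtain wx wy where w: "w = (wx, wy)" by (cases w)
  obtain ux uy where uu: "u = (ux, uy)" by (cases u)
  have z: "wx \<bullet> (P *v wx) + wy \<bullet> (Q *v wy) = 0"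
    using Mlin_inner[of P A Q w] assms(4) w by simp
  have n1: "wx \<bullet> (P *v wx) \<ge> 0" "wy \<bullet> (Q *v wy) \<ge> 0" using assms(1,2) unfolding psd_def by auto
  have "wx \<bullet> (P *v wx) = 0" using z n1 by linarith
  then have pw: "P *v wx = 0" using psd_zero[OF assms(1)] by blast
  have "wy \<bullet> (Q *v wy) = 0" using z n1 by linarith
  then have qw: "Q *v wy = 0" using psd_zero[OF assms(2)] by blast
  have e1: "P *v wx + A *v wy = 0" "Q *v wy - transpose A *v wx = 0"
    using assms(4) w unfolding Mlin_def by (auto simp: zero_prod_def)
  have aw: "A *v wy = 0" using e1(1) pw by simp
  have atw: "transpose A *v wx = 0" using e1(2) qw by simp
  have "w \<bullet> w = (P *v ux + A *v uy) \<bullet> wx + (Q *v uy - transpose A *v ux) \<bullet> wy"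
    using u uu w by (simp add: Mlin_def)
  also have "\<dots> = wx \<bullet> (P *v ux) + wx \<bullet> (A *v uy) + wy \<bullet> (Q *v uy) - wy \<bullet> (transpose A *v ux)"
    by (simp add: inner_add_left inner_diff_left inner_add_right inner_diff_right inner_commute del: transpose_matrix_vector)
  also have "\<dots> = 0"
    using psd_sym[OF assms(1), of wx ux] psd_sym[OF assms(2), of wy uy] tr_dot[of wx A uy]
      tr_dot[of wy "transpose A" ux] pw qw aw atw by simp
  finally show ?thesis by simp
qed

lemma saddle_fo:
  assumes "psd P" "psd Q" "saddle_point (regf (qsaddle P b A Q c) \<nu>) z"
  shows "Mlin P A Q z + \<nu> *\<^sub>R z = (b, c)"
proof -
  obtain x y where z: "z = (x, y)" by (cases z)
  let ?g = "regf (qsaddle P b A Q c) \<nu>"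
  have sp: "\<And>x' y'. ?g (x, y') \<le> ?g (x, y) \<and> ?g (x, y) \<le> ?g (x', y)"
    using assms(3) z unfolding saddle_point_def by auto
  define r where "r = P *v x + A *v y - b + \<nu> *\<^sub>R x"
  have "r \<bullet> r = 0"
  proof (rule poly_min)
    fix t :: real
    show "?g (x + t *\<^sub>R r, y) = ?g (x, y) + t * (r \<bullet> r) + t^2 * ((r \<bullet> (P *v r))/2 + \<nu>/2 * (r \<bullet> r))"
      using exp_x[OF assms(1), where b=b and A=A and Q=Q and c=c and \<nu>=\<nu> and x=x and t=t and h=r and y=y] unfolding r_def[symmetric] .
    show "?g (x + 0 *\<^sub>R r, y) \<le> ?g (x + t *\<^sub>R r, y)" using sp by simp
  qed
  then have r0: "r = 0" by simp
  define r' where "r' = transpose A *v x - Q *v y + c - \<nu> *\<^sub>R y"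
  have "- (r' \<bullet> r') = 0"
  proof (rule poly_min)
    fix t :: real
    show "- ?g (x, y + t *\<^sub>R r') = - ?g (x, y) + t * (- (r' \<bullet> r')) + t^2 * ((r' \<bullet> (Q *v r'))/2 + \<nu>/2 * (r' \<bullet> r'))"
      using exp_y[OF assms(2), where b=b and A=A and P=P and c=c and \<nu>=\<nu> and x=x and t=t and h=r' and y=y] unfolding r'_def[symmetric] by (simp add: algebra_simps)
    show "- ?g (x, y + 0 *\<^sub>R r') \<le> - ?g (x, y + t *\<^sub>R r')" using sp by simp
  qed
  then have r1: "r' = 0" by simp
  show ?thesis using r0 r1 unfolding z Mlin_def r_def r'_def
    by (simp add: algebra_simps eq_diff_eq diff_eq_eq)
qed

lemma stat_fo:
  assumes "psd P" "psd Q" "stationary_point (qsaddle P b A Q c) z"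
  shows "Mlin P A Q z = (b, c)"
proof -
  obtain x y where z: "z = (x, y)" by (cases z)
  let ?g = "regf (qsaddle P b A Q c) 0"
  have d: "(?g has_derivative (\<lambda>_. 0)) (at z)"
    using assms(3) unfolding stationary_point_def regf0 .
  define r where "r = P *v x + A *v y - b + 0 *\<^sub>R x"
  have "r \<bullet> r = 0"
  proof (rule poly_stat[OF _ d])
    fix t :: real
    have "z + t *\<^sub>R (r, 0) = (x + t *\<^sub>R r, y)" by (simp add: z)
    then have "?g (z + t *\<^sub>R (r, 0)) = ?g (x + t *\<^sub>R r, y)" by simp
    also have "\<dots> = ?g (x, y) + t * (r \<bullet> r) + t^2 * ((r \<bullet> (P *v r))/2 + 0/2 * (r \<bullet> r))"
      using exp_x[OF assms(1), where b=b and A=A and Q=Q and c=c and \<nu>=0 and x=x and t=t and h=r and y=y] unfolding r_def[symmetric] .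
    finally show "?g (z + t *\<^sub>R (r, 0)) = ?g z + t * (r \<bullet> r) + t^2 * ((r \<bullet> (P *v r))/2 + 0/2 * (r \<bullet> r))"
      using z by simp
  qed
  then have r0: "r = 0" by simp
  define r' where "r' = transpose A *v x - Q *v y + c - 0 *\<^sub>R y"
  have "r' \<bullet> r' = 0"
  proof (rule poly_stat[OF _ d])
    fix t :: real
    have "z + t *\<^sub>R (0, r') = (x, y + t *\<^sub>R r')" by (simp add: z)
    then have "?g (z + t *\<^sub>R (0, r')) = ?g (x, y + t *\<^sub>R r')" by simp
    also have "\<dots> = ?g (x, y) + t * (r' \<bullet> r') + t^2 * (-(r' \<bullet> (Q *v r'))/2 - 0/2 * (r' \<bullet> r'))"
      using exp_y[OF assms(2), where b=b and A=A and P=P and c=c and \<nu>=0 and x=x and t=t and h=r' and y=y] unfolding r'_def[symmetric] .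
    finally show "?g (z + t *\<^sub>R (0, r')) = ?g z + t * (r' \<bullet> r') + t^2 * (-(r' \<bullet> (Q *v r'))/2 - 0/2 * (r' \<bullet> r'))"
      using z by simp
  qed
  then have r1: "r' = 0" by simp
  show ?thesis using r0 r1 unfolding z Mlin_def r_def r'_def
    by (simp add: algebra_simps eq_diff_eq diff_eq_eq)
qed

theorem proposition5p3:
  fixes P :: "real^'n^'n" and b :: "real^'n" and A :: "real^'m^'n"
    and Q :: "real^'m^'m" and c :: "real^'m"
  assumes "psd P" and "psd Q"
    and "\<exists>z. stationary_point (qsaddle P b A Q c) z"
  shows "\<exists>C \<delta>0. C > 0 \<and> \<delta>0 > 0 \<and>
    (\<forall>\<nu>1 \<nu>2 z1 z2. 0 < \<nu>1 \<and> \<nu>1 < \<delta>0 \<and> 0 < \<nu>2 \<and> \<nu>2 < \<delta>0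
       \<and> saddle_point (regf (qsaddle P b A Q c) \<nu>1) z1
       \<and> saddle_point (regf (qsaddle P b A Q c) \<nu>2) z2
       \<longrightarrow> norm (z1 - z2) \<le> C * \<bar>\<nu>1 - \<nu>2\<bar>)"
proof -
  let ?M = "Mlin P A Q"
  obtain z0 where "stationary_point (qsaddle P b A Q c) z0" using assms(3) by blast
  then have Mz0: "?M z0 = (b, c)" using stat_fo assms(1,2) by blast
  have lin: "linear ?M" by (rule Mlin_linear)
  have sub: "subspace (range ?M)" by (rule real_vector.linear_subspace_image[OF lin subspace_UNIV])
  have cl: "closed (range ?M)" by (rule closed_subspace[OF sub])
  obtain e where e: "e > 0" "\<forall>x\<in>range ?M. e * norm x \<le> norm (?M x)"
    using injective_imp_isometric[OF cl sub Mlin_bl] Mlin_inj[OF assms(1,2)] by blast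
  define C where "C = norm z0 / e + 1"
  have Cpos: "C > 0" unfolding C_def using e(1) by (simp add: add_nonneg_pos)
  have main: "norm (z1 - z2) \<le> C * \<bar>\<nu>1 - \<nu>2\<bar>"
    if n1: "0 < \<nu>1" and n2: "0 < \<nu>2"
      and s1: "saddle_point (regf (qsaddle P b A Q c) \<nu>1) z1"
      and s2: "saddle_point (regf (qsaddle P b A Q c) \<nu>2) z2" for \<nu>1 \<nu>2 z1 z2
  proof -
    have f1: "?M z1 + \<nu>1 *\<^sub>R z1 = ?M z0" using saddle_fo[OF assms(1,2) s1] Mz0 by simp
    have f2: "?M z2 + \<nu>2 *\<^sub>R z2 = ?M z0" using saddle_fo[OF assms(1,2) s2] Mz0 by simp
    have g1: "?M (z0 - z1) = \<nu>1 *\<^sub>R z1" unfolding linear_diff[OF lin] f1[symmetric] by simp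
    have g2: "?M (z0 - z2) = \<nu>2 *\<^sub>R z2" unfolding linear_diff[OF lin] f2[symmetric] by simp
    have "0 \<le> inner (?M (z0 - z2)) (z0 - z2)" by (rule Mlin_mono[OF assms(1,2)])
    then have "0 \<le> \<nu>2 * inner z2 (z0 - z2)" unfolding g2 by simp
    then have "0 \<le> inner z2 (z0 - z2)" using n2 by (simp add: zero_le_mult_iff)
    then have "inner z2 z2 \<le> inner z2 z0" by (simp add: inner_diff_right)
    also have "\<dots> \<le> norm z2 * norm z0" by (rule Cauchy_Schwarz_ineq2[THEN order_trans[OF abs_ge_self]])
    finally have "norm z2 * norm z2 \<le> norm z2 * norm z0" by (simp add: power2_norm_eq_inner[symmetric] power2_eq_square)
    then have bz2: "norm z2 \<le> norm z0"
      by (cases "norm z2 = 0") (auto simp: mult_le_cancel_left)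
    define d where "d = z1 - z2"
    have drange: "d \<in> range ?M"
    proof
      show "d = ?M ((1/\<nu>1) *\<^sub>R (z0 - z1) - (1/\<nu>2) *\<^sub>R (z0 - z2))"
        using linear_diff[OF lin, of "(1/\<nu>1) *\<^sub>R (z0 - z1)" "(1/\<nu>2) *\<^sub>R (z0 - z2)"]
          linear_scale[OF lin, of "1/\<nu>1" "z0 - z1"] linear_scale[OF lin, of "1/\<nu>2" "z0 - z2"]
          g1 g2 n1 n2 by (simp add: d_def)
    qed simp
    have eq: "?M d + \<nu>1 *\<^sub>R d = (\<nu>2 - \<nu>1) *\<^sub>R z2"
      using f1 f2 unfolding d_def linear_diff[OF lin] by (simp add: algebra_simps)
    have mono: "0 \<le> inner (?M d) d" by (rule Mlin_mono[OF assms(1,2)])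
    have "(norm (?M d))^2 \<le> (norm (?M d + \<nu>1 *\<^sub>R d))^2"
    proof -
      have "(norm (?M d + \<nu>1 *\<^sub>R d))^2 = (norm (?M d))^2 + 2 * \<nu>1 * inner d (?M d) + \<nu>1^2 * inner d d"
        by (rule norm_exp)
      moreover have "0 \<le> 2 * \<nu>1 * inner d (?M d)" using mono n1 by (simp add: inner_commute)
      moreover have "0 \<le> \<nu>1^2 * inner d d" by simp
      ultimately show ?thesis by linarith
    qed
    then have "norm (?M d) \<le> norm (?M d + \<nu>1 *\<^sub>R d)"
      by (rule power2_le_imp_le) simp
    also have "\<dots> = \<bar>\<nu>1 - \<nu>2\<bar> * norm z2" unfolding eq by (simp add: abs_minus_commute)
    also have "\<dots> \<le> \<bar>\<nu>1 - \<nu>2\<bar> * norm z0" using bz2 by (simp add: mult_left_mono)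
    finally have "e * norm d \<le> \<bar>\<nu>1 - \<nu>2\<bar> * norm z0" using e(2) drange by (meson order_trans)
    then have "norm d \<le> \<bar>\<nu>1 - \<nu>2\<bar> * norm z0 / e" using e(1) by (simp add: field_simps)
    also have "\<dots> \<le> C * \<bar>\<nu>1 - \<nu>2\<bar>" unfolding C_def by (simp add: field_simps)
    finally show ?thesis unfolding d_def .
  qed
  show ?thesis
    by (rule exI[of _ C], rule exI[of _ 1]) (use Cpos main in auto)
qed

end
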